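(* Let $n_1,\dots,n_k$ be nonnegative integers and $N=n_1+\dots+n_k$. Then \[ \mathcal{L}^{(t)}_T\Big(\prod_{i=1}^{k}T^{(t)}_{n_i}(x)\Big) \] equals the number of subsets $S$ (the "marked" vertices) of the vertex set of $C_{n_1}\sqcup\dots\sqcup C_{n_k}$ with $|S|=N/(t+1)$ (the count is $0$ if $N/(t+1)$ is not an integer) such that for every marked vertex $j$ in a cycle $C_{n_i}$, the $t$ vertices $j+1,j+2,\dots,j+t$ (indices mod $n_i$) are not all unmarked.
   Context: Fix an integer $t\ge1$. For $n\ge1$ let $C_n$ be the $n$-cycle with vertices $1,\dots,n$ (indices mod $n$); $C_0$ is empty. If $n\ge t+1$, the $t$-paths in $C_n$ are the $n$ sequences $(i,i+1,\dots,i+t)$ mod $n$, $i=1,\dots,n$; if $n\le t$ there are none. Define $T^{(t)}_n(x)=\sum_F(-1)^{|F|}x^{\,n-(t+1)|F|}$ over all families $F$ of $t$-paths in $C_n$ with pairwise disjoint vertex sets, $T^{(t)}_0=1$. Let $\mathcal{L}^{(t)}_T$ be the linear functional on polynomials with $\mathcal{L}^{(t)}_T(x^{(t+1)j})=\binom{(t+1)j}{j}$ for $j\ge0$ and $\mathcal{L}^{(t)}_T(x^m)=0$ if $t+1\nmid m$. *)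

theory Defs
  imports "HOL-Computational_Algebra.Polynomial"
begin

(* Cycle C_n has vertices 0..n-1 (the paper's 1..n, shifted), indices mod n.
   The t-path starting at i is (i, i+1, ..., i+t) mod n; it exists only if n >= t+1.
   t-paths are identified by their starting vertex. *)
definition tpath_starts :: "nat \<Rightarrow> nat \<Rightarrow> nat set" where
  "tpath_starts t n = (if t + 1 \<le> n then {0..<n} else {})"

definition tpath_verts :: "nat \<Rightarrow> nat \<Rightarrow> nat \<Rightarrow> nat set" where
  "tpath_verts t n i = {(i + j) mod n | j. j \<le> t}"

definition disjoint_families :: "nat \<Rightarrow> nat \<Rightarrow> nat set set" where
  "disjoint_families t n = {F. F \<subseteq> tpath_starts t n \<and>
     (\<forall>i\<in>F. \<forall>j\<in>F. i \<noteq> j \<longrightarrow> tpath_verts t n i \<inter> tpath_verts t n j = {})}"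

definition Tpoly :: "nat \<Rightarrow> nat \<Rightarrow> int poly" where
  "Tpoly t n = (\<Sum>F\<in>disjoint_families t n.
      monom ((-1) ^ card F) (n - (t + 1) * card F))"

definition LT :: "nat \<Rightarrow> int poly \<Rightarrow> int" where
  "LT t p = (\<Sum>m\<le>degree p. coeff p m *
      (if (t + 1) dvd m then int (m choose (m div (t + 1))) else 0))"

definition union_verts :: "nat list \<Rightarrow> (nat \<times> nat) set" where
  "union_verts ns = {(i, v). i < length ns \<and> v < ns ! i}"

definition good_marking :: "nat \<Rightarrow> nat list \<Rightarrow> (nat \<times> nat) set \<Rightarrow> bool" where
  "good_marking t ns S = (\<forall>(i, j)\<in>S. \<exists>l\<in>{1..t}. (i, (j + l) mod (ns ! i)) \<in> S)"

end

theory Submission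
  imports Defs "HOL-Library.FuncSet"
begin

lemma prodl: "(\<Prod>n\<leftarrow>ns. (f n::'a::comm_monoid_mult)) = (\<Prod>i<length ns. f (ns!i))"
  by (induct ns) (simp_all add: prod.lessThan_Suc_shift del: prod.lessThan_Suc)

lemma suml: "sum_list ns = (\<Sum>i<length ns. ns!i)"
  by (simp add: sum_list_sum_nth atLeast0LessThan)

lemma tv_img: "tpath_verts t n j = (\<lambda>l. (j + l) mod n) ` {..t}"
  unfolding tpath_verts_def by auto

lemma tv_finite [simp]: "finite (tpath_verts t n j)"
  by (simp add: tv_img)

lemma tv_sub: "n > 0 \<Longrightarrow> tpath_verts t n j \<subseteq> {..<n}"
  unfolding tpath_verts_def by auto

lemma tv_card: assumes "t + 1 \<le> n" shows "card (tpath_verts t n j) = t + 1"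
proof -
  have "inj_on (\<lambda>l. (j + l) mod n) {..t}"
  proof (rule inj_onI)
    fix a b assume a: "a \<in> {..t}" and b: "b \<in> {..t}" and e: "(j + a) mod n = (j + b) mod n"
    have "int (j + a) mod int n = int (j + b) mod int n" using e by (metis of_nat_mod)
    then have "int n dvd int (j + a) - int (j + b)" by (simp only: mod_eq_dvd_iff)
    then have d: "int n dvd int a - int b" by simp
    show "a = b"
    proof (rule ccontr)
      assume "a \<noteq> b"
      then have "int a - int b \<noteq> 0" by simp
      from dvd_imp_le_int[OF this d] show False using a b assms by simp
    qed
  qed
  then show ?thesis by (simp add: tv_img card_image)
qed

lemma tv_self: "j < n \<Longrightarrow> j \<in> tpath_verts t n j"
  unfolding tpath_verts_def by force

lemma DF_sub: "F \<in> disjoint_families t n \<Longrightarrow> F \<subseteq> {..<n}"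
  unfolding disjoint_families_def tpath_starts_def by (auto split: if_splits)

lemma DF_big: "F \<in> disjoint_families t n \<Longrightarrow> F \<noteq> {} \<Longrightarrow> t + 1 \<le> n"
  unfolding disjoint_families_def tpath_starts_def by (auto split: if_splits)

lemma DF_finite: "finite (disjoint_families t n)"
proof -
  have "disjoint_families t n \<subseteq> Pow {..<n}" using DF_sub by blast
  then show ?thesis by (rule finite_subset) simp
qed

lemma DF_cover_card:
  assumes F: "F \<in> disjoint_families t n"
  shows "card (\<Union>j\<in>F. tpath_verts t n j) = (t + 1) * card F"
proof (cases "F = {}")
  case True then show ?thesis by simp
next
  case False
  then have n: "t + 1 \<le> n" using DF_big F by blast
  have fin: "finite F" using DF_sub[OF F] finite_subset by blast
  have "card (\<Union>j\<in>F. tpath_verts t n j) = (\<Sum>j\<in>F. card (tpath_verts t n j))"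
    apply (rule card_UN_disjoint[OF fin])
    using F unfolding disjoint_families_def by (auto simp: tpath_verts_def)
  also have "\<dots> = (t + 1) * card F" using tv_card[OF n] by simp
  finally show ?thesis .
qed

lemma DF_le:
  assumes F: "F \<in> disjoint_families t n"
  shows "(t + 1) * card F \<le> n"
proof (cases "F = {}")
  case True then show ?thesis by simp
next
  case False
  then have n: "t + 1 \<le> n" using DF_big F by blast
  have "(\<Union>j\<in>F. tpath_verts t n j) \<subseteq> {..<n}" using tv_sub[of n t] n by force
  then have "card (\<Union>j\<in>F. tpath_verts t n j) \<le> n"
    by (metis card_lessThan card_mono finite_lessThan)
  then show ?thesis using DF_cover_card[OF F] by simp
qed


definition wt :: "nat \<Rightarrow> nat \<Rightarrow> int" where
  "wt t m = (if (t + 1) dvd m then int (m choose (m div (t + 1))) else 0)"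

lemma LT_bound: "degree p \<le> D \<Longrightarrow> LT t p = (\<Sum>m\<le>D. coeff p m * wt t m)"
  unfolding LT_def wt_def
  by (rule sum.mono_neutral_left) (auto simp: coeff_eq_0)

lemma LT_add: "LT t (p + q) = LT t p + LT t q"
proof -
  define D where "D = max (degree p) (degree q)"
  have "degree (p + q) \<le> D" unfolding D_def by (rule degree_add_le) auto
  then have "LT t (p + q) = (\<Sum>m\<le>D. coeff (p + q) m * wt t m)" by (rule LT_bound)
  also have "\<dots> = (\<Sum>m\<le>D. coeff p m * wt t m) + (\<Sum>m\<le>D. coeff q m * wt t m)"
    by (simp add: distrib_right sum.distrib)
  also have "\<dots> = LT t p + LT t q"
    using LT_bound[of p D t] LT_bound[of q D t] by (simp add: D_def)
  finally show ?thesis .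
qed

lemma LT_0: "LT t 0 = 0" by (simp add: LT_def)

lemma LT_sum: "LT t (\<Sum>x\<in>A. f x) = (\<Sum>x\<in>A. LT t (f x))"
  by (induct A rule: infinite_finite_induct) (simp_all add: LT_0 LT_add)

lemma LT_monom: "LT t (monom c e) = c * wt t e"
proof (cases "c = 0")
  case True then show ?thesis by (simp add: LT_def)
next
  case False
  then have "LT t (monom c e) = (\<Sum>m\<le>e. coeff (monom c e) m * wt t m)"
    by (intro LT_bound) (simp add: degree_monom_eq)
  also have "\<dots> = (\<Sum>m\<in>{e}. coeff (monom c e) m * wt t m)"
    by (rule sum.mono_neutral_right) (auto simp: coeff_monom)
  finally show ?thesis by simp
qed

lemma prod_monom: "(\<Prod>i\<in>A. monom (c i) (e i)) = monom (\<Prod>i\<in>A. c i) (\<Sum>i\<in>A. e i)"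
  by (induct A rule: infinite_finite_induct) (simp_all add: mult_monom one_poly_eq_simps)

lemma alt_pow: "finite A \<Longrightarrow> (\<Sum>X\<in>Pow A. (-1::int) ^ card X) = (if A = {} then 1 else 0)"
proof (cases "A = {}")
  case True then show ?thesis by simp
next
  case False
  assume fin: "finite A"
  have "card {T. T \<subseteq> A \<and> {} \<subseteq> T \<and> even(card T)} = card {T. T \<subseteq> A \<and> {} \<subseteq> T \<and> odd(card T)}"
    using card_subsupersets_even_odd[OF fin] False by blast
  then have "(\<Sum>X\<in>Pow A. (-1::int) ^ card X) = 0"
    using sum_alternating_cancels[of "Pow A" card] fin by (simp add: Pow_def)
  then show ?thesis using False by simp
qed

lemma mod_inj: fixes a b j n :: nat assumes "a < n" "b < n" "(j + a) mod n = (j + b) mod n" shows "a = b"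
proof -
  have "int (j + a) mod int n = int (j + b) mod int n" using assms(3) by (metis of_nat_mod)
  then have "int n dvd int (j + a) - int (j + b)" by (simp only: mod_eq_dvd_iff)
  then have d: "int n dvd int a - int b" by simp
  show "a = b"
  proof (rule ccontr)
    assume "a \<noteq> b"
    then have "int a - int b \<noteq> 0" by simp
    from dvd_imp_le_int[OF this d] show False using assms by simp
  qed
qed

lemma mod_shift: fixes a b j j' n :: nat assumes "j' < n" "(j + a) mod n = (j' + b) mod n" "b \<le> a"
  shows "(j + (a - b)) mod n = j'"
proof -
  have "int (j + a) mod int n = int (j' + b) mod int n" using assms(2) by (metis of_nat_mod)
  then have "int n dvd int (j + a) - int (j' + b)" by (simp only: mod_eq_dvd_iff)
  also have "int (j + a) - int (j' + b) = int (j + (a - b)) - int j'" using assms(3) by simp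
  finally have "int (j + (a - b)) mod int n = int j' mod int n" by (simp only: mod_eq_dvd_iff)
  then have "(j + (a - b)) mod n = j' mod n" by (metis of_nat_mod of_nat_eq_iff)
  then show ?thesis using assms(1) by simp
qed

definition Bad :: "nat \<Rightarrow> nat list \<Rightarrow> nat \<Rightarrow> (nat \<times> nat) set \<Rightarrow> nat set" where
  "Bad t ns i S = {j. (i, j) \<in> S \<and> (\<forall>l\<in>{1..t}. (i, (j + l) mod (ns ! i)) \<notin> S)}"

lemma Bad_sub: "S \<subseteq> union_verts ns \<Longrightarrow> Bad t ns i S \<subseteq> {..<ns ! i}"
  unfolding Bad_def union_verts_def by auto

lemma Bad_DF:
  assumes S: "S \<subseteq> union_verts ns" and X: "X \<subseteq> Bad t ns i S"
  shows "X \<in> disjoint_families t (ns ! i)"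
proof (cases "X = {}")
  case True then show ?thesis by (simp add: disjoint_families_def)
next
  case False
  let ?n = "ns ! i"
  have Xn: "X \<subseteq> {..<?n}" using Bad_sub[OF S] X by blast
  obtain j0 where j0: "j0 \<in> X" using False by blast
  have big: "t + 1 \<le> ?n"
  proof (rule ccontr)
    assume "\<not> t + 1 \<le> ?n"
    moreover have "j0 < ?n" using Xn j0 by blast
    ultimately have "?n \<in> {1..t}" by auto
    moreover have "(i, j0) \<in> S" "\<forall>l\<in>{1..t}. (i, (j0 + l) mod ?n) \<notin> S"
      using X j0 unfolding Bad_def by auto
    ultimately have "(i, (j0 + ?n) mod ?n) \<notin> S" "(i, j0) \<in> S" by blast+
    moreover have "(j0 + ?n) mod ?n = j0" using \<open>j0 < ?n\<close> by simp
    ultimately show False by simp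
  qed
  have disj: "tpath_verts t ?n j \<inter> tpath_verts t ?n j' = {}"
    if j: "j \<in> X" and j': "j' \<in> X" and ne: "j \<noteq> j'" for j j'
  proof (rule ccontr)
    assume "tpath_verts t ?n j \<inter> tpath_verts t ?n j' \<noteq> {}"
    then obtain a b where a: "a \<le> t" and b: "b \<le> t" and e: "(j + a) mod ?n = (j' + b) mod ?n"
      unfolding tpath_verts_def by auto
    have jn: "j < ?n" and jn': "j' < ?n" using Xn j j' by auto
    have Bj: "(i, j) \<in> S" "\<forall>l\<in>{1..t}. (i, (j + l) mod ?n) \<notin> S" using X j unfolding Bad_def by auto
    have Bj': "(i, j') \<in> S" "\<forall>l\<in>{1..t}. (i, (j' + l) mod ?n) \<notin> S" using X j' unfolding Bad_def by auto
    show False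
    proof (cases "b \<le> a")
      case True
      have m: "(j + (a - b)) mod ?n = j'" by (rule mod_shift[OF jn' e True])
      have "a - b \<noteq> 0" using m ne jn by (metis add_0_right mod_less)
      then have "a - b \<in> {1..t}" using a by auto
      then show False using Bj(2) Bj' m by metis
    next
      case False
      have m: "(j' + (b - a)) mod ?n = j" by (rule mod_shift[OF jn e[symmetric]]) (use False in auto)
      have "b - a \<noteq> 0" using m ne jn' by (metis add_0_right mod_less)
      then have "b - a \<in> {1..t}" using b by auto
      then show False using Bj'(2) Bj m by metis
    qed
  qed
  show ?thesis unfolding disjoint_families_def tpath_starts_def
    using big Xn disj by auto
qed

lemma V_Sigma: "union_verts ns = Sigma {..<length ns} (\<lambda>i. {..<ns ! i})"
  unfolding union_verts_def by auto

lemma card_V: "card (union_verts ns) = sum_list ns"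
  by (simp add: V_Sigma suml)

lemma finite_V: "finite (union_verts ns)"
  by (simp add: V_Sigma)

lemma count_A:
  assumes p: "p \<in> PiE {..<length ns} (\<lambda>i. disjoint_families t (ns ! i))"
    and gM: "(\<Sum>i<length ns. card (p i)) \<le> M"
  shows "card {S. S \<subseteq> union_verts ns \<and> card S = M \<and> (\<forall>i<length ns. p i \<subseteq> Bad t ns i S)}
       = card {S'. S' \<subseteq> union_verts ns - Sigma {..<length ns} (\<lambda>i. \<Union>j\<in>p i. tpath_verts t (ns ! i) j)
                \<and> card S' = M - (\<Sum>i<length ns. card (p i))}"
proof -
  let ?I = "{..<length ns}"
  let ?V = "union_verts ns"
  define P0 where "P0 = Sigma ?I p"
  define C where "C = Sigma ?I (\<lambda>i. \<Union>j\<in>p i. tpath_verts t (ns ! i) j)"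
  define g where "g = (\<Sum>i<length ns. card (p i))"
  have pDF: "p i \<in> disjoint_families t (ns ! i)" if "i < length ns" for i
    using p that by auto
  have pn: "p i \<subseteq> {..<ns ! i}" if "i < length ns" for i using DF_sub[OF pDF[OF that]] .
  have finp: "finite (p i)" if "i < length ns" for i using pn[OF that] finite_subset by blast
  have P0C: "P0 \<subseteq> C"
  proof
    fix x assume "x \<in> P0"
    then obtain i j where x: "x = (i, j)" "i < length ns" "j \<in> p i" unfolding P0_def by auto
    then have "j < ns ! i" using pn by blast
    then have "j \<in> tpath_verts t (ns ! i) j" by (rule tv_self)
    then show "x \<in> C" unfolding C_def using x by blast
  qed
  have CV: "C \<subseteq> ?V"
  proof
    fix x assume "x \<in> C"
    then obtain i j v where x: "x = (i, v)" "i < length ns" "j \<in> p i" "v \<in> tpath_verts t (ns ! i) j"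
      unfolding C_def by auto
    then have "ns ! i > 0" using pn by fastforce
    then show "x \<in> ?V" using x tv_sub unfolding union_verts_def by blast
  qed
  have cardP0: "card P0 = g" unfolding P0_def g_def
    using pn by (subst card_SigmaI) (auto intro: finite_subset)
  have cardC: "card C = (t + 1) * g"
  proof -
    have "card C = (\<Sum>i<length ns. card (\<Union>j\<in>p i. tpath_verts t (ns ! i) j))"
      unfolding C_def using finp by (subst card_SigmaI) auto
    also have "\<dots> = (\<Sum>i<length ns. (t + 1) * card (p i))"
      by (rule sum.cong) (simp_all add: DF_cover_card pDF)
    finally show ?thesis by (simp add: g_def sum_distrib_left)
  qed
  have key: "(j + l) mod ns ! i \<notin> p i" if i: "i < length ns" and j: "j \<in> p i" and l: "l \<in> {1..t}" for i j l
  proof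
    let ?n = "ns ! i"
    assume j': "(j + l) mod ?n \<in> p i"
    have big: "t + 1 \<le> ?n" using DF_big[OF pDF[OF i]] j by blast
    have jn: "j < ?n" using pn i j by blast
    have ne: "(j + l) mod ?n \<noteq> j"
    proof
      assume "(j + l) mod ?n = j"
      then have "(j + l) mod ?n = (j + 0) mod ?n" using jn by simp
      then have "l = 0" using mod_inj[of l ?n 0 j] l big by auto
      then show False using l by simp
    qed
    have "(j + l) mod ?n \<in> tpath_verts t ?n j" using l unfolding tpath_verts_def by auto
    moreover have "(j + l) mod ?n \<in> tpath_verts t ?n ((j + l) mod ?n)"
      using big by (intro tv_self) simp
    ultimately show False using pDF[OF i] j j' ne unfolding disjoint_families_def by blast
  qed
  have eq: "{S. S \<subseteq> ?V \<and> card S = M \<and> (\<forall>i<length ns. p i \<subseteq> Bad t ns i S)}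
      = (\<lambda>S'. S' \<union> P0) ` {S'. S' \<subseteq> ?V - C \<and> card S' = M - g}"
  proof (intro equalityI subsetI)
    fix S assume "S \<in> {S. S \<subseteq> ?V \<and> card S = M \<and> (\<forall>i<length ns. p i \<subseteq> Bad t ns i S)}"
    then have S: "S \<subseteq> ?V" "card S = M" "\<And>i. i < length ns \<Longrightarrow> p i \<subseteq> Bad t ns i S" by auto
    have P0S: "P0 \<subseteq> S" unfolding P0_def using S(3) unfolding Bad_def by blast
    have "S - P0 \<subseteq> ?V - C"
    proof
      fix x assume x: "x \<in> S - P0"
      show "x \<in> ?V - C"
      proof
        show "x \<in> ?V" using x S by blast
        show "x \<notin> C"
        proof
          assume "x \<in> C"
          then obtain i j v where xi: "x = (i, v)" "i < length ns" "j \<in> p i" "v \<in> tpath_verts t (ns ! i) j"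
            unfolding C_def by auto
          then obtain l where l: "l \<le> t" "v = (j + l) mod ns ! i" unfolding tpath_verts_def by auto
          show False
          proof (cases "l = 0")
            case True
            have "j < ns ! i" using pn xi by blast
            then have "v = j" using l True by simp
            then show False using x xi unfolding P0_def by auto
          next
            case False
            then have "l \<in> {1..t}" using l by auto
            then show False using S(3)[OF xi(2)] xi x l unfolding Bad_def by blast
          qed
        qed
      qed
    qed
    moreover have "card (S - P0) = M - g"
    proof -
      have "finite S" using S(1) finite_V finite_subset by blast
      then have "finite P0" using P0S finite_subset by blast
      then show ?thesis using S P0S cardP0 card_Diff_subset by metis
    qed
    moreover have "S = (S - P0) \<union> P0" using P0S by blast
    ultimately show "S \<in> (\<lambda>S'. S' \<union> P0) ` {S'. S' \<subseteq> ?V - C \<and> card S' = M - g}" by blast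
  next
    fix S assume "S \<in> (\<lambda>S'. S' \<union> P0) ` {S'. S' \<subseteq> ?V - C \<and> card S' = M - g}"
    then obtain S' where S': "S' \<subseteq> ?V - C" "card S' = M - g" "S = S' \<union> P0" by blast
    have SV: "S \<subseteq> ?V" using S' P0C CV by blast
    have finS': "finite S'" using S'(1) finite_V finite_subset by blast
    have finP0: "finite P0" using P0C CV finite_V finite_subset by metis
    have "card S = card S' + card P0"
    proof -
      have "S' \<inter> P0 = {}" using S'(1) P0C by blast
      then show ?thesis using card_Un_disjoint[OF finS' finP0] S'(3) by simp
    qed
    then have cS: "card S = M" using S'(2) cardP0 gM g_def by simp
    have "p i \<subseteq> Bad t ns i S" if i: "i < length ns" for i
    proof
      fix j assume j: "j \<in> p i"
      have "(i, j) \<in> S" using S'(3) i j unfolding P0_def by auto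
      moreover have "(i, (j + l) mod ns ! i) \<notin> S" if l: "l \<in> {1..t}" for l
      proof
        assume a: "(i, (j + l) mod ns ! i) \<in> S"
        have "(i, (j + l) mod ns ! i) \<in> C" unfolding C_def tpath_verts_def using i j l by auto
        then have "(i, (j + l) mod ns ! i) \<notin> S'" using S'(1) by blast
        then have "(i, (j + l) mod ns ! i) \<in> P0" using a S'(3) by blast
        then show False using key[OF i j l] unfolding P0_def by auto
      qed
      ultimately show "j \<in> Bad t ns i S" unfolding Bad_def by blast
    qed
    then show "S \<in> {S. S \<subseteq> ?V \<and> card S = M \<and> (\<forall>i<length ns. p i \<subseteq> Bad t ns i S)}"
      using SV cS by blast
  qed
  have inj: "inj_on (\<lambda>S'. S' \<union> P0) {S'. S' \<subseteq> ?V - C \<and> card S' = M - g}"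
  proof (rule inj_onI)
    fix A B assume "A \<in> {S'. S' \<subseteq> ?V - C \<and> card S' = M - g}" "B \<in> {S'. S' \<subseteq> ?V - C \<and> card S' = M - g}"
      "A \<union> P0 = B \<union> P0"
    then show "A = B" using P0C by blast
  qed
  have "card {S. S \<subseteq> ?V \<and> card S = M \<and> (\<forall>i<length ns. p i \<subseteq> Bad t ns i S)}
      = card {S'. S' \<subseteq> ?V - C \<and> card S' = M - g}"
    unfolding eq by (rule card_image[OF inj])
  then show ?thesis by (simp only: C_def g_def)
qed

lemma cover_props:
  assumes p: "p \<in> PiE {..<length ns} (\<lambda>i. disjoint_families t (ns ! i))"
  shows "card (union_verts ns - Sigma {..<length ns} (\<lambda>i. \<Union>j\<in>p i. tpath_verts t (ns ! i) j))
          = sum_list ns - (t + 1) * (\<Sum>i<length ns. card (p i))"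
    and "(t + 1) * (\<Sum>i<length ns. card (p i)) \<le> sum_list ns"
proof -
  let ?V = "union_verts ns"
  define C where "C = Sigma {..<length ns} (\<lambda>i. \<Union>j\<in>p i. tpath_verts t (ns ! i) j)"
  define g where "g = (\<Sum>i<length ns. card (p i))"
  have pDF: "p i \<in> disjoint_families t (ns ! i)" if "i < length ns" for i
    using p that by auto
  have pn: "p i \<subseteq> {..<ns ! i}" if "i < length ns" for i using DF_sub[OF pDF[OF that]] .
  have finp: "finite (p i)" if "i < length ns" for i using pn[OF that] finite_subset by blast
  have CV: "C \<subseteq> ?V"
  proof
    fix x assume "x \<in> C"
    then obtain i j v where x: "x = (i, v)" "i < length ns" "j \<in> p i" "v \<in> tpath_verts t (ns ! i) j"
      unfolding C_def by auto
    then have "ns ! i > 0" using pn by fastforce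
    then show "x \<in> ?V" using x tv_sub unfolding union_verts_def by blast
  qed
  have cardC: "card C = (t + 1) * g"
  proof -
    have "card C = (\<Sum>i<length ns. card (\<Union>j\<in>p i. tpath_verts t (ns ! i) j))"
      unfolding C_def using finp by (subst card_SigmaI) auto
    also have "\<dots> = (\<Sum>i<length ns. (t + 1) * card (p i))"
      by (rule sum.cong) (simp_all add: DF_cover_card pDF)
    finally show ?thesis by (simp add: g_def sum_distrib_left)
  qed
  have "card (?V - C) = card ?V - card C" using CV finite_V card_Diff_subset finite_subset by metis
  then show "card (?V - C) = sum_list ns - (t + 1) * (\<Sum>i<length ns. card (p i))"
    using cardC card_V g_def by simp
  have "card C \<le> card ?V" using CV finite_V card_mono by metis
  then show "(t + 1) * (\<Sum>i<length ns. card (p i)) \<le> sum_list ns"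
    using cardC card_V g_def by simp
qed

lemma card_filter_sum: "finite A \<Longrightarrow> int (card {x\<in>A. P x}) = (\<Sum>x\<in>A. if P x then 1 else 0)"
  by (simp add: sum.inter_filter[symmetric])

lemma prod_ind: "finite A \<Longrightarrow> (\<Prod>i\<in>A. if Q i then (1::int) else 0) = (if \<forall>i\<in>A. Q i then 1 else 0)"
  by (induct A rule: finite_induct) auto

lemma good_iff: "S \<subseteq> union_verts ns \<Longrightarrow> good_marking t ns S \<longleftrightarrow> (\<forall>i<length ns. Bad t ns i S = {})"
proof -
  assume SV: "S \<subseteq> union_verts ns"
  have "good_marking t ns S \<longleftrightarrow> (\<forall>i j. (i, j) \<in> S \<longrightarrow> (\<exists>l\<in>{1..t}. (i, (j + l) mod (ns ! i)) \<in> S))"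
    unfolding good_marking_def by blast
  also have "\<dots> \<longleftrightarrow> (\<forall>i. Bad t ns i S = {})"
    unfolding Bad_def by blast
  also have "\<dots> \<longleftrightarrow> (\<forall>i<length ns. Bad t ns i S = {})"
  proof
    assume a: "\<forall>i<length ns. Bad t ns i S = {}"
    show "\<forall>i. Bad t ns i S = {}"
    proof
      fix i show "Bad t ns i S = {}"
      proof (cases "i < length ns")
        case True then show ?thesis using a by blast
      next
        case False then show ?thesis using SV unfolding Bad_def union_verts_def by auto
      qed
    qed
  qed blast
  finally show ?thesis .
qed

theorem mainTheorem7:
  fixes t :: nat and ns :: "nat list"
  assumes "t \<ge> 1"
  shows "LT t (\<Prod>n\<leftarrow>ns. Tpoly t n) =
    (if (t + 1) dvd sum_list ns then
       int (card {S. S \<subseteq> union_verts ns \<and> card S = sum_list ns div (t + 1)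
                    \<and> good_marking t ns S})
     else 0)"
proof -
  let ?I = "{..<length ns}"
  define PP where "PP = PiE ?I (\<lambda>i. disjoint_families t (ns ! i))"
  define g where "g p = (\<Sum>i<length ns. card (p i))" for p :: "nat \<Rightarrow> nat set"
  define N where "N = sum_list ns"
  have finPP: "finite PP" unfolding PP_def by (intro finite_PiE) (auto simp: DF_finite)
  have gle: "(t + 1) * g p \<le> N" if "p \<in> PP" for p
    using cover_props(2)[of p] that unfolding PP_def g_def N_def by blast
  have "(\<Prod>n\<leftarrow>ns. Tpoly t n) = (\<Prod>i\<in>?I. \<Sum>F\<in>disjoint_families t (ns ! i).
      monom ((-1) ^ card F) (ns ! i - (t + 1) * card F))"
    by (simp add: prodl Tpoly_def)
  also have "\<dots> = (\<Sum>p\<in>PP. \<Prod>i\<in>?I. monom ((-1) ^ card (p i)) (ns ! i - (t + 1) * card (p i)))"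
    unfolding PP_def by (rule prod_sum_PiE) (auto simp: DF_finite)
  also have "\<dots> = (\<Sum>p\<in>PP. monom ((-1) ^ g p) (N - (t + 1) * g p))"
  proof (rule sum.cong[OF refl])
    fix p assume p: "p \<in> PP"
    have le: "(t + 1) * card (p i) \<le> ns ! i" if "i \<in> ?I" for i
      using DF_le p that unfolding PP_def by blast
    have "(\<Sum>i\<in>?I. ns ! i - (t + 1) * card (p i)) = (\<Sum>i\<in>?I. ns ! i) - (\<Sum>i\<in>?I. (t + 1) * card (p i))"
      by (rule sum_subtractf_nat) (use le in auto)
    also have "\<dots> = N - (t + 1) * g p" by (simp add: N_def g_def suml sum_distrib_left)
    finally have e: "(\<Sum>i\<in>?I. ns ! i - (t + 1) * card (p i)) = N - (t + 1) * g p" .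
    have c: "(\<Prod>i\<in>?I. (-1::int) ^ card (p i)) = (-1) ^ g p" by (simp add: g_def power_sum)
    show "(\<Prod>i\<in>?I. monom ((-1) ^ card (p i)) (ns ! i - (t + 1) * card (p i))) = monom ((-1) ^ g p) (N - (t + 1) * g p)"
      unfolding prod_monom e by (simp add: g_def power_sum)
  qed
  finally have P: "LT t (\<Prod>n\<leftarrow>ns. Tpoly t n) = (\<Sum>p\<in>PP. (-1) ^ g p * wt t (N - (t + 1) * g p))"
    by (simp add: LT_sum LT_monom)
  show ?thesis
  proof (cases "(t + 1) dvd N")
    case False
    have "wt t (N - (t + 1) * g p) = 0" if "p \<in> PP" for p
    proof -
      have "\<not> (t + 1) dvd (N - (t + 1) * g p)"
      proof
        assume "(t + 1) dvd (N - (t + 1) * g p)"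
        then have "(t + 1) dvd (N - (t + 1) * g p + (t + 1) * g p)"
          by (intro dvd_add) (simp_all only: dvd_triv_left)
        then show False using False gle[OF that] by simp
      qed
      then show ?thesis by (simp add: wt_def)
    qed
    then show ?thesis using P False N_def by simp
  next
    case True
    then obtain M where M: "N = (t + 1) * M" by blast
    let ?V = "union_verts ns"
    define SS where "SS = {S. S \<subseteq> ?V \<and> card S = M}"
    have "SS \<subseteq> Pow ?V" unfolding SS_def by blast
    then have finSS: "finite SS" using finite_V finite_subset by blast
    have w: "wt t (N - (t + 1) * g p) = int (card {S\<in>SS. \<forall>i<length ns. p i \<subseteq> Bad t ns i S})"
      if p: "p \<in> PP" for p
    proof -
      have "(t + 1) * g p \<le> (t + 1) * M" using gle[OF p] M by simp
      then have gM: "g p \<le> M" using mult_le_cancel1[of "t + 1" "g p" M] by linarith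
      have e1: "N - (t + 1) * g p = (t + 1) * (M - g p)" using M gM by (simp add: diff_mult_distrib2)
      have "wt t (N - (t + 1) * g p) = int ((N - (t + 1) * g p) choose (M - g p))"
      proof -
        have d: "(t + 1) * (M - g p) div (t + 1) = M - g p" by (rule nonzero_mult_div_cancel_left) simp
        show ?thesis unfolding wt_def e1 d by (simp only: dvd_triv_left if_True)
      qed
      also have "(N - (t + 1) * g p) choose (M - g p) = card {S\<in>SS. \<forall>i<length ns. p i \<subseteq> Bad t ns i S}"
      proof -
        have "{S\<in>SS. \<forall>i<length ns. p i \<subseteq> Bad t ns i S}
            = {S. S \<subseteq> ?V \<and> card S = M \<and> (\<forall>i<length ns. p i \<subseteq> Bad t ns i S)}"
          unfolding SS_def by blast
        also have "card \<dots> = card {S'. S' \<subseteq> ?V - Sigma {..<length ns} (\<lambda>i. \<Union>j\<in>p i. tpath_verts t (ns ! i) j)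
                \<and> card S' = M - g p}"
          using count_A[of p ns t M] p gM unfolding PP_def g_def by blast
        also have "\<dots> = card (?V - Sigma {..<length ns} (\<lambda>i. \<Union>j\<in>p i. tpath_verts t (ns ! i) j)) choose (M - g p)"
          by (rule n_subsets) (simp add: finite_V)
        also have "\<dots> = (N - (t + 1) * g p) choose (M - g p)"
          using cover_props(1)[of p ns t] p unfolding PP_def g_def N_def by simp
        finally show ?thesis by simp
      qed
      finally show ?thesis .
    qed
    have inner: "(\<Sum>p\<in>PP. if \<forall>i<length ns. p i \<subseteq> Bad t ns i S then (-1::int) ^ g p else 0)
        = (if \<forall>i<length ns. Bad t ns i S = {} then 1 else 0)" if S: "S \<in> SS" for S
    proof -
      have SV: "S \<subseteq> ?V" using S unfolding SS_def by blast
      have finB: "finite (Bad t ns i S)" for i using Bad_sub[OF SV] finite_subset by blast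
      have "{p\<in>PP. \<forall>i<length ns. p i \<subseteq> Bad t ns i S} = PiE ?I (\<lambda>i. Pow (Bad t ns i S))"
        unfolding PP_def using Bad_DF[OF SV] by (auto simp: PiE_def Pi_def)
      then have "(\<Sum>p\<in>PP. if \<forall>i<length ns. p i \<subseteq> Bad t ns i S then (-1::int) ^ g p else 0)
          = (\<Sum>p\<in>PiE ?I (\<lambda>i. Pow (Bad t ns i S)). (-1) ^ g p)"
        using finPP by (simp add: sum.inter_filter[symmetric])
      also have "\<dots> = (\<Sum>p\<in>PiE ?I (\<lambda>i. Pow (Bad t ns i S)). \<Prod>i\<in>?I. (-1) ^ card (p i))"
        by (simp add: g_def power_sum)
      also have "\<dots> = (\<Prod>i\<in>?I. \<Sum>X\<in>Pow (Bad t ns i S). (-1) ^ card X)"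
        by (rule prod_sum_PiE[symmetric]) (simp_all add: finB)
      also have "\<dots> = (\<Prod>i\<in>?I. if Bad t ns i S = {} then 1 else 0)"
        by (simp add: alt_pow finB)
      also have "\<dots> = (if \<forall>i<length ns. Bad t ns i S = {} then 1 else 0)"
        by (simp add: prod_ind)
      finally show ?thesis .
    qed
    have "LT t (\<Prod>n\<leftarrow>ns. Tpoly t n) = (\<Sum>p\<in>PP. (-1) ^ g p * int (card {S\<in>SS. \<forall>i<length ns. p i \<subseteq> Bad t ns i S}))"
      using P w by simp
    also have "\<dots> = (\<Sum>p\<in>PP. \<Sum>S\<in>SS. if \<forall>i<length ns. p i \<subseteq> Bad t ns i S then (-1) ^ g p else 0)"
      by (simp add: card_filter_sum finSS sum_distrib_left if_distrib cong: if_cong)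
    also have "\<dots> = (\<Sum>S\<in>SS. \<Sum>p\<in>PP. if \<forall>i<length ns. p i \<subseteq> Bad t ns i S then (-1) ^ g p else 0)"
      by (rule sum.swap)
    also have "\<dots> = (\<Sum>S\<in>SS. if \<forall>i<length ns. Bad t ns i S = {} then 1 else 0)"
      by (rule sum.cong[OF refl]) (rule inner)
    also have "\<dots> = int (card {S\<in>SS. \<forall>i<length ns. Bad t ns i S = {}})"
      by (simp add: card_filter_sum finSS)
    also have "{S\<in>SS. \<forall>i<length ns. Bad t ns i S = {}} = {S. S \<subseteq> union_verts ns \<and> card S = sum_list ns div (t + 1)
                    \<and> good_marking t ns S}"
    proof -
      have Md: "sum_list ns div (t + 1) = M" unfolding N_def[symmetric] M
        by (rule nonzero_mult_div_cancel_left) simp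
      show ?thesis unfolding SS_def Md using good_iff[of _ ns t] by blast
    qed
    finally show ?thesis using True N_def by simp
  qed
qed

end
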